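(* The sectional curvatures of $\mathrm{SU}(n,1)$ with respect to $\tilde{g}$ are bounded above by \[ \frac 14 + 2 \cdot \frac 14 + 2 \cdot \frac 64 \cdot (2n+1) + 2 \cdot \frac 34 \cdot (2n+1) = \frac{36n + 21}{4}. \]
   Context: $\mathrm{SU}(n,1)$ is the indefinite special unitary group, with Lie algebra $\mathfrak{su}(n,1)$ and Cartan decomposition $\mathfrak{su}(n,1)=\mathfrak k\oplus\mathfrak p$ (with $\mathfrak k$ the Lie algebra of the maximal compact subgroup $U(n)$). The canonical metric $g$ is the left-invariant metric given on $\mathfrak{su}(n,1)$ by the Killing form $B(X,Y)=\operatorname{tr}(\operatorname{ad}X\operatorname{ad}Y)$ on $\mathfrak p$, by $-B$ on $\mathfrak k$, with $\mathfrak k\perp\mathfrak p$. The metric $\tilde g$ is $\tilde g=\frac{1}{n+1}g$, which makes the quotient $\mathrm{SU}(n,1)/U(n)$ have holomorphic sectional curvature $-1$. *)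

theory Defs
  imports "HOL-Analysis.Analysis"
begin

text \<open>Matrices of size (n+1) x (n+1) are indexed by the type 'n option, with CARD('n) = n;
  the index None plays the role of the last coordinate (the one with sign -1).\<close>

type_synonym 'n cmat = "complex ^ 'n option ^ 'n option"

definition cadj :: "'n::finite cmat \<Rightarrow> 'n cmat" where
  "cadj A = (\<chi> i j. cnj (A $ j $ i))"

definition Jmat :: "'n::finite cmat" where
  "Jmat = (\<chi> i j. if i = j then (if i = None then -1 else 1) else 0)"

definition su_alg :: "'n::finite cmat set" where
  "su_alg = {X. trace X = 0 \<and> cadj X ** Jmat + Jmat ** X = 0}"

definition lie_br :: "'n::finite cmat \<Rightarrow> 'n cmat \<Rightarrow> 'n cmat" where
  "lie_br X Y = X ** Y - Y ** X"

definition trace_on :: "'a::euclidean_space set \<Rightarrow> ('a \<Rightarrow> 'a) \<Rightarrow> real" where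
  "trace_on V T = (let B = (SOME B. B \<subseteq> V \<and> independent B \<and> span B = V)
                   in (\<Sum>b\<in>B. representation B (T b) b))"

definition killing :: "'n::finite cmat \<Rightarrow> 'n cmat \<Rightarrow> real" where
  "killing X Y = trace_on (su_alg :: 'n cmat set) (\<lambda>Z. lie_br X (lie_br Y Z))"

text \<open>Cartan decomposition: k = skew-Hermitian part (Lie algebra of U(n)), p = Hermitian part.\<close>
definition kpart :: "'n::finite cmat \<Rightarrow> 'n cmat" where
  "kpart X = (1/2::real) *\<^sub>R (X - cadj X)"

definition ppart :: "'n::finite cmat \<Rightarrow> 'n cmat" where
  "ppart X = (1/2::real) *\<^sub>R (X + cadj X)"

definition gcan :: "'n::finite cmat \<Rightarrow> 'n cmat \<Rightarrow> real" where
  "gcan X Y = killing (ppart X) (ppart Y) - killing (kpart X) (kpart Y)"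

definition gtil :: "'n::finite cmat \<Rightarrow> 'n cmat \<Rightarrow> real" where
  "gtil X Y = gcan X Y / (real CARD('n) + 1)"

text \<open>Levi-Civita connection on left-invariant fields (Koszul formula).\<close>
definition nabla :: "'n::finite cmat \<Rightarrow> 'n cmat \<Rightarrow> 'n cmat" where
  "nabla X Y = (THE Z. Z \<in> su_alg \<and> (\<forall>W\<in>su_alg.
      gtil Z W = (gtil (lie_br X Y) W - gtil (lie_br Y W) X + gtil (lie_br W X) Y) / 2))"

definition curv :: "'n::finite cmat \<Rightarrow> 'n cmat \<Rightarrow> 'n cmat \<Rightarrow> 'n cmat" where
  "curv X Y Z = nabla X (nabla Y Z) - nabla Y (nabla X Z) - nabla (lie_br X Y) Z"

definition sec_curv :: "'n::finite cmat \<Rightarrow> 'n cmat \<Rightarrow> real" where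
  "sec_curv X Y = gtil (curv X Y Y) X / (gtil X X * gtil Y Y - (gtil X Y)\<^sup>2)"

end

theory Submission
  imports Defs
begin



lemma G_sum_left:
  fixes G :: "'a::real_vector \<Rightarrow> 'b \<Rightarrow> real"
  assumes add: "\<And>a b c. G (a+b) c = G a c + G b c" and sc: "\<And>r a c. G (r *\<^sub>R a) c = r * G a c"
  shows "G (\<Sum>i\<in>I. a i *\<^sub>R v i) w = (\<Sum>i\<in>I. a i * G (v i) w)"
proof (induction I rule: infinite_finite_induct)
  case (infinite A)
  have z: "G 0 w = 0"
  proof -
    have "G (0 *\<^sub>R 0) w = 0 * G 0 w" by (rule sc)
    then show ?thesis by (metis scale_zero_left mult_zero_left)
  qed
  from infinite show ?case using z by simp
next
  case empty
  have z: "G 0 w = 0"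
  proof -
    have "G (0 *\<^sub>R 0) w = 0 * G 0 w" by (rule sc)
    then show ?thesis by (metis scale_zero_left mult_zero_left)
  qed
  then show ?case by simp
next
  case (insert x F) then show ?case by (simp add: add sc)
qed

lemma on_expand:
  fixes G :: "'a::real_vector \<Rightarrow> 'a \<Rightarrow> real"
  assumes add: "\<And>a b c. G (a+b) c = G a c + G b c" and sc: "\<And>r a c. G (r *\<^sub>R a) c = r * G a c"
    and fin: "finite F" and one: "\<forall>f\<in>F. G f f = 1"
    and orth: "\<forall>f\<in>F. \<forall>f'\<in>F. f \<noteq> f' \<longrightarrow> G f f' = 0"
    and v: "v \<in> span F"
  shows "v = (\<Sum>f\<in>F. G v f *\<^sub>R f)"
proof -
  obtain u where u: "v = (\<Sum>f\<in>F. u f *\<^sub>R f)" using v span_finite[OF fin] by auto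
  have "G v f = u f" if "f \<in> F" for f
  proof -
    have "G v f = (\<Sum>f'\<in>F. u f' * G f' f)" unfolding u by (rule G_sum_left[of G, OF add sc])
    also have "\<dots> = (\<Sum>f'\<in>F. if f' = f then u f else 0)"
      by (rule sum.cong) (use one orth that in auto)
    also have "\<dots> = u f" using fin that by simp
    finally show ?thesis .
  qed
  then show ?thesis using u by simp
qed

lemma gs_exists:
  fixes G :: "'a::euclidean_space \<Rightarrow> 'a \<Rightarrow> real"
  assumes V: "subspace V"
   and add: "\<And>a b c. G (a+b) c = G a c + G b c"
   and sc: "\<And>r a c. G (r *\<^sub>R a) c = r * G a c"
   and sym: "\<And>a b. a \<in> V \<Longrightarrow> b \<in> V \<Longrightarrow> G a b = G b a"
   and pd: "\<And>a. a \<in> V \<Longrightarrow> a \<noteq> 0 \<Longrightarrow> G a a > 0"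
   and y: "y \<in> V" "G y y = 1"
  shows "\<exists>F. finite F \<and> F \<subseteq> V \<and> y \<in> F \<and> (\<forall>f\<in>F. G f f = 1)
     \<and> (\<forall>f\<in>F. \<forall>f'\<in>F. f \<noteq> f' \<longrightarrow> G f f' = 0) \<and> (\<forall>v\<in>V. v = (\<Sum>f\<in>F. G v f *\<^sub>R f))"
proof -
  obtain S where S: "finite S" "S \<subseteq> V" "span S = V"
    using basis_subspace_exists[OF V] by metis
  have "\<exists>F. finite F \<and> F \<subseteq> V \<and> y \<in> F \<and> (\<forall>f\<in>F. G f f = 1)
     \<and> (\<forall>f\<in>F. \<forall>f'\<in>F. f \<noteq> f' \<longrightarrow> G f f' = 0) \<and> S' \<subseteq> span F" if "S' \<subseteq> S" for S'
    using finite_subset[OF that S(1)] that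
  proof (induction S' rule: finite_subset_induct)
    case empty
    show ?case by (rule exI[of _ "{y}"]) (use y in auto)
  next
    case (insert x S')
    then obtain F where F: "finite F" "F \<subseteq> V" "y \<in> F" "\<forall>f\<in>F. G f f = 1"
      "\<forall>f\<in>F. \<forall>f'\<in>F. f \<noteq> f' \<longrightarrow> G f f' = 0" "S' \<subseteq> span F" by blast
    define w where "w = x - (\<Sum>f\<in>F. G x f *\<^sub>R f)"
    have xV: "x \<in> V" using insert S by auto
    have wV: "w \<in> V" unfolding w_def
      using F(2) xV by (intro subspace_diff[OF V] subspace_sum[OF V] subspace_scale[OF V]) auto
    have Gw: "G w f = 0" if "f \<in> F" for f
    proof -
      have "G w f = G x f - G (\<Sum>f'\<in>F. G x f' *\<^sub>R f') f"
        unfolding w_def using add[of "x - (\<Sum>f'\<in>F. G x f' *\<^sub>R f')" "\<Sum>f'\<in>F. G x f' *\<^sub>R f'" f]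
        by simp
      also have "G (\<Sum>f'\<in>F. G x f' *\<^sub>R f') f = (\<Sum>f'\<in>F. G x f' * G f' f)"
        by (rule G_sum_left[of G, OF add sc])
      also have "(\<Sum>f'\<in>F. G x f' * G f' f) = (\<Sum>f'\<in>F. if f' = f then G x f else 0)"
        by (rule sum.cong) (use F that in auto)
      also have "\<dots> = G x f" using F that by simp
      finally show ?thesis by simp
    qed
    show ?case
    proof (cases "w = 0")
      case True
      have "(\<Sum>f\<in>F. G x f *\<^sub>R f) \<in> span F" by (intro span_sum span_scale) (auto intro: span_base)
      then have "x \<in> span F" using True unfolding w_def by simp
      then show ?thesis using F by (intro exI[of _ F]) auto
    next
      case False
      define c where "c = 1 / sqrt (G w w)"
      have gp: "G w w > 0" using pd[OF wV False] .
      have c1: "G (c *\<^sub>R w) (c *\<^sub>R w) = 1"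
      proof -
        have "G (c *\<^sub>R w) (c *\<^sub>R w) = c * G w (c *\<^sub>R w)" by (simp add: sc)
        also have "G w (c *\<^sub>R w) = G (c *\<^sub>R w) w" using wV by (intro sym) (auto intro: subspace_scale[OF V])
        also have "\<dots> = c * G w w" by (simp add: sc)
        finally have "G (c *\<^sub>R w) (c *\<^sub>R w) = (c * c) * G w w" by simp
        also have "c * c = 1 / G w w" using gp by (simp add: c_def)
        finally show ?thesis using gp by simp
      qed
      have cw0: "G (c *\<^sub>R w) f = 0" "G f (c *\<^sub>R w) = 0" if "f \<in> F" for f
        using Gw[OF that] sym[of f "c *\<^sub>R w"] that F(2) wV by (auto simp: sc subspace_scale[OF V])
      have nin: "c *\<^sub>R w \<notin> F" using cw0 c1 by fastforce
      have "x \<in> span (insert (c *\<^sub>R w) F)"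
      proof -
        have cne: "c \<noteq> 0" using gp by (simp add: c_def)
        have "c *\<^sub>R w \<in> span (insert (c *\<^sub>R w) F)" by (rule span_base) simp
        from span_scale[OF this, of "1/c"] cne have ws: "w \<in> span (insert (c *\<^sub>R w) F)" by simp
        have "x = w + (\<Sum>f\<in>F. G x f *\<^sub>R f)" by (simp add: w_def)
        also have "\<dots> \<in> span (insert (c *\<^sub>R w) F)"
          by (intro span_add ws span_sum span_scale) (auto intro: span_base)
        finally show ?thesis .
      qed
      moreover have "span F \<subseteq> span (insert (c *\<^sub>R w) F)" by (rule span_mono) auto
      ultimately show ?thesis using F c1 cw0 nin wV
        by (intro exI[of _ "insert (c *\<^sub>R w) F"])
           (auto intro!: subspace_scale[OF V])
    qed
  qed
  from this[OF order_refl] obtain F where F: "finite F" "F \<subseteq> V" "y \<in> F" "\<forall>f\<in>F. G f f = 1"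
      "\<forall>f\<in>F. \<forall>f'\<in>F. f \<noteq> f' \<longrightarrow> G f f' = 0" "S \<subseteq> span F" by (elim exE conjE)
  have "V \<subseteq> span F" using span_minimal[OF F(6) subspace_span] S(3) by simp
  then have "\<forall>v\<in>V. v = (\<Sum>f\<in>F. G v f *\<^sub>R f)" using on_expand[OF add sc F(1) F(4) F(5)] by blast
  then show ?thesis using F by (intro exI[of _ F]) simp
qed

lemma trace_frame:
  fixes G :: "'a::euclidean_space \<Rightarrow> 'a \<Rightarrow> real"
  assumes V: "subspace V" and I: "finite I" and fV: "\<And>i. i \<in> I \<Longrightarrow> f i \<in> V"
   and add: "\<And>a b c. G (a+b) c = G a c + G b c"
   and sc: "\<And>r a c. G (r *\<^sub>R a) c = r * G a c"
   and ex: "\<And>v. v \<in> V \<Longrightarrow> v = (\<Sum>i\<in>I. G v (f i) *\<^sub>R f i)"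
   and lin: "linear T" and TV: "\<And>v. v \<in> V \<Longrightarrow> T v \<in> V"
  shows "trace_on V T = (\<Sum>i\<in>I. G (T (f i)) (f i))"
proof -
  define B where "B = (SOME B. B \<subseteq> V \<and> independent B \<and> span B = V)"
  have "\<exists>B. B \<subseteq> V \<and> independent B \<and> span B = V"
    using basis_subspace_exists[OF V] by metis
  then have hB: "B \<subseteq> V" "independent B" "span B = V" unfolding B_def by (metis (mono_tags, lifting) someI_ex)+
  have fB: "finite B" using independent_bound hB(2) by blast
  have "trace_on V T = (\<Sum>b\<in>B. representation B (T b) b)"
    unfolding trace_on_def Let_def B_def ..
  also have "\<dots> = (\<Sum>b\<in>B. \<Sum>i\<in>I. G (T b) (f i) * representation B (f i) b)"
  proof (rule sum.cong[OF refl])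
    fix b assume b: "b \<in> B"
    have Tb: "T b \<in> V" using TV hB(1) b by auto
    have "representation B (T b) b = representation B (\<Sum>i\<in>I. G (T b) (f i) *\<^sub>R f i) b"
      using ex[OF Tb] by simp
    also have "\<dots> = (\<Sum>i\<in>I. representation B (G (T b) (f i) *\<^sub>R f i) b)"
    proof -
      have "\<And>i. i \<in> I \<Longrightarrow> G (T b) (f i) *\<^sub>R f i \<in> span B"
        using fV hB(3) by (simp add: subspace_scale[OF V])
      from representation_sum[OF hB(2) this] show ?thesis by (rule fun_cong)
    qed
    also have "\<dots> = (\<Sum>i\<in>I. G (T b) (f i) * representation B (f i) b)"
      using representation_scale[OF hB(2)] fV hB(3) by simp
    finally show "representation B (T b) b = (\<Sum>i\<in>I. G (T b) (f i) * representation B (f i) b)" .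
  qed
  also have "\<dots> = (\<Sum>i\<in>I. \<Sum>b\<in>B. representation B (f i) b * G (T b) (f i))"
    by (subst sum.swap) (simp add: mult.commute)
  also have "\<dots> = (\<Sum>i\<in>I. G (\<Sum>b\<in>B. representation B (f i) b *\<^sub>R T b) (f i))"
    by (simp add: G_sum_left[of G, OF add sc])
  also have "\<dots> = (\<Sum>i\<in>I. G (T (\<Sum>b\<in>B. representation B (f i) b *\<^sub>R b)) (f i))"
    using lin by (simp add: linear_sum linear_scale)
  also have "\<dots> = (\<Sum>i\<in>I. G (T (f i)) (f i))"
    using sum_representation_eq[OF hB(2) _ fB order_refl] fV hB(3) by simp
  finally show ?thesis .
qed



type_synonym 'n cm = "'n cmat"

definition sg :: "'n option \<Rightarrow> complex" where "sg i = (if i = None then -1 else 1)"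

lemma sg_sq[simp]: "sg i * sg i = 1" by (simp add: sg_def)
lemma cnj_sg[simp]: "cnj (sg i) = sg i" by (simp add: sg_def)

lemma J_nth: "Jmat $ i $ j = (if i = j then sg i else 0)" by (simp add: Jmat_def sg_def)

lemma J_left: "(Jmat ** A) $ a $ b = sg a * A $ a $ b"
proof -
  have "(Jmat ** A) $ a $ b = (\<Sum>k\<in>UNIV. (if a = k then sg a else 0) * A $ k $ b)"
    by (simp add: matrix_matrix_mult_def J_nth)
  also have "\<dots> = (\<Sum>k\<in>UNIV. if a = k then sg a * A $ k $ b else 0)" by (rule sum.cong) auto
  finally show ?thesis by simp
qed

lemma J_right: "(A ** Jmat) $ a $ b = A $ a $ b * sg b"
proof -
  have "(A ** Jmat) $ a $ b = (\<Sum>k\<in>UNIV. A $ a $ k * (if k = b then sg k else 0))"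
    by (simp add: matrix_matrix_mult_def J_nth)
  also have "\<dots> = (\<Sum>k\<in>UNIV. if k = b then A $ a $ k * sg b else 0)" by (rule sum.cong) auto
  finally show ?thesis by simp
qed

lemma cadj_nth[simp]: "cadj A $ i $ j = cnj (A $ j $ i)" by (simp add: cadj_def)

lemma JJ: "Jmat ** Jmat = mat 1"
  by (simp add: vec_eq_iff J_left) (simp add: Jmat_def mat_def sg_def)

lemma cadj_J: "cadj Jmat = Jmat" by (simp add: vec_eq_iff Jmat_def)

lemma cadj_cadj[simp]: "cadj (cadj A) = A" by (simp add: vec_eq_iff)
lemma cadj_add: "cadj (A + B) = cadj A + cadj B" by (simp add: vec_eq_iff)
lemma cadj_diff: "cadj (A - B) = cadj A - cadj B" by (simp add: vec_eq_iff)
lemma cadj_minus: "cadj (- A) = - cadj A" by (simp add: vec_eq_iff)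
lemma cadj_zero[simp]: "cadj 0 = 0" by (simp add: vec_eq_iff)
lemma cadj_scaleR: "cadj (r *\<^sub>R A) = r *\<^sub>R cadj A" by (simp add: vec_eq_iff complex_cnj_scaleR)
lemma cadj_mult: "cadj (A ** B) = cadj B ** cadj A"
  by (simp add: vec_eq_iff matrix_matrix_mult_def cnj_sum mult.commute)

lemma cadj_lie: "cadj (lie_br A B) = lie_br (cadj B) (cadj A)"
  by (simp add: lie_br_def cadj_diff cadj_mult)

lemma mm_zero_left[simp]: "(0::'n::finite cmat) ** (C::'n cmat) = 0" by simp
lemma mm_zero_right[simp]: "(C::'n::finite cmat) ** (0::'n cmat) = 0" by simp
lemma mm_scaleR_left: "(r *\<^sub>R (A::'n::finite cmat)) ** (B::'n cmat) = r *\<^sub>R (A ** B)"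
  by (simp add: vec_eq_iff matrix_matrix_mult_def scaleR_sum_right)
lemma mm_scaleR_right: "(A::'n::finite cmat) ** (r *\<^sub>R (B::'n cmat)) = r *\<^sub>R (A ** B)"
  by (simp add: vec_eq_iff matrix_matrix_mult_def scaleR_sum_right)
lemma mm_add_right: "((A::'n::finite cmat) + B) ** (C::'n cmat) = A ** C + B ** C"
  by (simp add: vec_eq_iff matrix_matrix_mult_def sum.distrib distrib_right)
lemma mm_diff_left: "(A::'n::finite cmat) ** ((B::'n cmat) - C) = A ** B - A ** C"
  using matrix_add_ldistrib[of A "B - C" C] by (simp add: eq_diff_eq)
lemma mm_diff_right: "((A::'n::finite cmat) - B) ** (C::'n cmat) = A ** C - B ** C"
  using mm_add_right[of "A - B" B C] by (simp add: eq_diff_eq)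
lemma mm_minus_left: "(- (A::'n::finite cmat)) ** (C::'n cmat) = - (A ** C)"
  using mm_diff_right[of 0 A C] by simp
lemma mm_minus_right: "(A::'n::finite cmat) ** (- (C::'n cmat)) = - (A ** C)"
  using mm_diff_left[of A 0 C] by simp

lemma lie_add_left: "lie_br (A + B) C = lie_br A C + lie_br B C"
  by (simp add: lie_br_def mm_add_right matrix_add_ldistrib)
lemma lie_add_right: "lie_br C (A + B) = lie_br C A + lie_br C B"
  by (simp add: lie_br_def mm_add_right matrix_add_ldistrib)
lemma lie_diff_left: "lie_br (A - B) C = lie_br A C - lie_br B C"
  by (simp add: lie_br_def mm_diff_right mm_diff_left)
lemma lie_diff_right: "lie_br C (A - B) = lie_br C A - lie_br C B"
  by (simp add: lie_br_def mm_diff_right mm_diff_left)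
lemma lie_scale_left: "lie_br (r *\<^sub>R A) C = r *\<^sub>R lie_br A C"
  by (simp add: lie_br_def mm_scaleR_left mm_scaleR_right scaleR_diff_right)
lemma lie_scale_right: "lie_br C (r *\<^sub>R A) = r *\<^sub>R lie_br C A"
  by (simp add: lie_br_def mm_scaleR_left mm_scaleR_right scaleR_diff_right)
lemma lie_minus_left: "lie_br (- A) C = - lie_br A C"
  by (simp add: lie_br_def mm_minus_left mm_minus_right)
lemma lie_minus_right: "lie_br C (- A) = - lie_br C A"
  by (simp add: lie_br_def mm_minus_left mm_minus_right)
lemma lie_zero_left[simp]: "lie_br 0 C = 0" by (simp add: lie_br_def)
lemma lie_zero_right[simp]: "lie_br C 0 = 0" by (simp add: lie_br_def)
lemma lie_anti: "lie_br A B = - lie_br B A" by (simp add: lie_br_def)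
lemma lie_self[simp]: "lie_br A A = 0" by (simp add: lie_br_def)
lemma jacobi: "lie_br (lie_br A B) C = lie_br A (lie_br B C) - lie_br B (lie_br A C)"
  by (simp add: lie_br_def mm_diff_right mm_diff_left matrix_mul_assoc)

lemma linear_lie_right: "linear (lie_br A)"
  by (rule linearI) (simp_all add: lie_add_right lie_scale_right)
lemma linear_lie_left: "linear (\<lambda>A. lie_br A B)"
  by (rule linearI) (simp_all add: lie_add_left lie_scale_left)

lemma swap3: "(\<Sum>i\<in>A. \<Sum>j\<in>B. \<Sum>k\<in>C. f i j k) = (\<Sum>k\<in>C. \<Sum>j\<in>B. \<Sum>i\<in>A. f i j k)"
proof -
  have "(\<Sum>i\<in>A. \<Sum>j\<in>B. \<Sum>k\<in>C. f i j k) = (\<Sum>i\<in>A. \<Sum>k\<in>C. \<Sum>j\<in>B. f i j k)"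
    by (rule sum.cong[OF refl], rule sum.swap)
  also have "\<dots> = (\<Sum>k\<in>C. \<Sum>i\<in>A. \<Sum>j\<in>B. f i j k)" by (rule sum.swap)
  also have "\<dots> = (\<Sum>k\<in>C. \<Sum>j\<in>B. \<Sum>i\<in>A. f i j k)" by (rule sum.cong[OF refl], rule sum.swap)
  finally show ?thesis .
qed

lemma swap23: "(\<Sum>i\<in>A. \<Sum>j\<in>B. \<Sum>k\<in>C. f i j k) = (\<Sum>i\<in>A. \<Sum>k\<in>C. \<Sum>j\<in>B. f i j k)"
  by (rule sum.cong[OF refl], rule sum.swap)

lemma cinner_Re: "(z::complex) \<bullet> w = Re (z * cnj w)"
  by (simp add: inner_complex_def)

lemma minner: "(X::'n::finite cmat) \<bullet> Y = (\<Sum>i\<in>UNIV. \<Sum>j\<in>UNIV. Re (X$i$j * cnj (Y$i$j)))"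
  by (simp add: inner_vec_def cinner_Re)

lemma inner_mm_left: "((A::'n::finite cmat) ** (B::'n cmat)) \<bullet> (C::'n cmat) = B \<bullet> (cadj A ** C)"
proof -
  have "((A::'n::finite cmat) ** (B::'n cmat)) \<bullet> (C::'n cmat) = (\<Sum>i\<in>UNIV. \<Sum>j\<in>UNIV. \<Sum>k\<in>UNIV. Re (A$i$k * B$k$j * cnj (C$i$j)))"
    unfolding minner matrix_matrix_mult_def by (simp only: vec_lambda_beta sum_distrib_right Re_sum)
  also have "\<dots> = (\<Sum>k\<in>UNIV. \<Sum>j\<in>UNIV. \<Sum>i\<in>UNIV. Re (A$i$k * B$k$j * cnj (C$i$j)))"
    by (rule swap3)
  also have "\<dots> = B \<bullet> (cadj A ** C)"
    by (simp add: minner matrix_matrix_mult_def sum_distrib_left Re_sum cnj_sum mult_ac)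
  finally show ?thesis .
qed

lemma inner_mm_right: "((B::'n::finite cmat) ** (A::'n cmat)) \<bullet> (C::'n cmat) = B \<bullet> (C ** cadj A)"
proof -
  have "((B::'n::finite cmat) ** (A::'n cmat)) \<bullet> (C::'n cmat) = (\<Sum>i\<in>UNIV. \<Sum>j\<in>UNIV. \<Sum>k\<in>UNIV. Re (B$i$k * A$k$j * cnj (C$i$j)))"
    unfolding minner matrix_matrix_mult_def by (simp only: vec_lambda_beta sum_distrib_right Re_sum)
  also have "\<dots> = (\<Sum>i\<in>UNIV. \<Sum>k\<in>UNIV. \<Sum>j\<in>UNIV. Re (B$i$k * A$k$j * cnj (C$i$j)))"
    by (rule swap23)
  also have "\<dots> = B \<bullet> (C ** cadj A)"
    by (simp add: minner matrix_matrix_mult_def sum_distrib_left Re_sum cnj_sum mult_ac)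
  finally show ?thesis .
qed

lemma inner_lie: "lie_br A W \<bullet> Z = W \<bullet> lie_br (cadj A) Z"
  unfolding lie_br_def inner_diff_left inner_diff_right inner_mm_left[of A W Z] inner_mm_right[of W A Z]
    inner_mm_left[of "cadj A" Z W] inner_mm_right[of Z "cadj A" W] cadj_cadj
  by (simp add: inner_commute)

lemma inner_cadj: "cadj (A::'n::finite cmat) \<bullet> cadj B = A \<bullet> B"
proof -
  have "cadj (A::'n::finite cmat) \<bullet> cadj B = (\<Sum>i\<in>UNIV. \<Sum>j\<in>UNIV. Re (A$j$i * cnj (B$j$i)))"
    by (simp add: minner flip: complex_cnj_mult)
  also have "\<dots> = A \<bullet> B" unfolding minner by (rule sum.swap)
  finally show ?thesis .
qed



lemma cscale: "r *\<^sub>R (z::complex) = of_real r * z" by (simp add: scaleR_conv_of_real)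
lemma sg_pm: "sg a = 1 \<or> sg a = -1" by (simp add: sg_def)

lemma cond_iff: "cadj X ** Jmat + Jmat ** X = 0 \<longleftrightarrow> (\<forall>a b. cnj (X$b$a) * sg b + sg a * X$a$b = 0)"
  by (simp add: vec_eq_iff J_left J_right)

lemma su_iff: "X \<in> su_alg \<longleftrightarrow> trace X = 0 \<and> (\<forall>a b. cnj (X$b$a) * sg b + sg a * X$a$b = 0)"
  by (simp add: su_alg_def cond_iff)

lemma trace_scaleR: "trace (r *\<^sub>R (X::'n::finite cmat)) = r *\<^sub>R trace X"
  by (simp add: trace_def scaleR_sum_right)

lemma su_subspace: "subspace su_alg"
  unfolding subspace_def
proof (intro conjI ballI allI)
  show "0 \<in> su_alg" unfolding su_iff by (simp add: trace_def)
next
  fix X Y :: "'a cmat" assume X: "X \<in> su_alg" and Y: "Y \<in> su_alg"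
  have "cnj ((X+Y)$b$a) * sg b + sg a * (X+Y)$a$b = 0" for a b
  proof -
    have 1: "cnj (X$b$a) * sg b + sg a * X$a$b = 0" and 2: "cnj (Y$b$a) * sg b + sg a * Y$a$b = 0"
      using X Y su_iff by blast+
    have "cnj ((X+Y)$b$a) * sg b + sg a * (X+Y)$a$b =
      (cnj (X$b$a) * sg b + sg a * X$a$b) + (cnj (Y$b$a) * sg b + sg a * Y$a$b)"
      by (simp add: algebra_simps)
    then show ?thesis using 1 2 by simp
  qed
  moreover have "trace (X + Y) = 0" using X Y by (simp add: su_iff trace_add)
  ultimately show "X + Y \<in> su_alg" by (simp add: su_iff)
next
  fix c :: real and X :: "'a cmat" assume X: "X \<in> su_alg"
  have "cnj ((c *\<^sub>R X)$b$a) * sg b + sg a * (c *\<^sub>R X)$a$b = 0" for a b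
  proof -
    have 1: "cnj (X$b$a) * sg b + sg a * X$a$b = 0" using X su_iff by blast
    have "cnj ((c *\<^sub>R X)$b$a) * sg b + sg a * (c *\<^sub>R X)$a$b =
      of_real c * (cnj (X$b$a) * sg b + sg a * X$a$b)"
      by (simp add: cscale algebra_simps)
    then show ?thesis using 1 by simp
  qed
  moreover have "trace (c *\<^sub>R X) = 0" using X by (simp add: su_iff trace_scaleR)
  ultimately show "c *\<^sub>R X \<in> su_alg" by (simp add: su_iff)
qed

lemma su_add: "X \<in> su_alg \<Longrightarrow> Y \<in> su_alg \<Longrightarrow> X + Y \<in> su_alg"
  by (rule subspace_add[OF su_subspace])
lemma su_diff: "X \<in> su_alg \<Longrightarrow> Y \<in> su_alg \<Longrightarrow> X - Y \<in> su_alg"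
  by (rule subspace_diff[OF su_subspace])
lemma su_scale: "X \<in> su_alg \<Longrightarrow> r *\<^sub>R X \<in> su_alg"
  by (rule subspace_scale[OF su_subspace])
lemma su_neg: "X \<in> su_alg \<Longrightarrow> - X \<in> su_alg"
  by (rule subspace_neg[OF su_subspace])
lemma su_zero: "0 \<in> su_alg"
  by (rule subspace_0[OF su_subspace])

lemma su_cadj: assumes "X \<in> su_alg" shows "cadj X \<in> su_alg"
proof -
  have t: "trace (cadj X) = cnj (trace X)" by (simp add: trace_def cnj_sum)
  have c: "cnj (X$b$a) * sg b + sg a * X$a$b = 0" for a b using assms su_iff by blast
  have "X$a$b * sg b + sg a * cnj (X$b$a) = 0" for a b
  proof -
    have "X$a$b * sg a + sg b * cnj (X$b$a) = cnj (cnj (X$a$b) * sg a + sg b * X$b$a)" by simp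
    also have "\<dots> = 0" using c[where a=b and b=a] by simp
    finally have h: "X$a$b * sg a + sg b * cnj (X$b$a) = 0" .
    show ?thesis using h sg_pm[of a] sg_pm[of b] by (auto simp: algebra_simps add_eq_0_iff)
  qed
  then show ?thesis using assms t by (simp add: su_iff)
qed

lemma su_condD: "X \<in> su_alg \<Longrightarrow> cadj X ** Jmat = - (Jmat ** X)"
  unfolding su_alg_def by (simp add: add_eq_0_iff)

lemma su_lie: assumes X: "X \<in> su_alg" and Y: "Y \<in> su_alg" shows "lie_br X Y \<in> su_alg"
proof -
  have t: "trace (lie_br X Y) = 0" by (simp add: lie_br_def trace_sub trace_mul_sym[of X Y])
  have hx: "cadj X ** Jmat = - (Jmat ** X)" and hy: "cadj Y ** Jmat = - (Jmat ** Y)"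
    using su_condD X Y by auto
  have 1: "(cadj Y ** cadj X) ** Jmat = Jmat ** (Y ** X)"
    by (simp add: matrix_mul_assoc[symmetric] hx mm_minus_right)
       (simp add: matrix_mul_assoc hy mm_minus_left)
  have 2: "(cadj X ** cadj Y) ** Jmat = Jmat ** (X ** Y)"
    by (simp add: matrix_mul_assoc[symmetric] hy mm_minus_right)
       (simp add: matrix_mul_assoc hx mm_minus_left)
  have "cadj (lie_br X Y) ** Jmat + Jmat ** lie_br X Y = 0"
    unfolding cadj_lie by (simp add: lie_br_def mm_diff_right mm_diff_left 1 2)
  then show ?thesis using t by (simp add: su_alg_def)
qed

lemma ppart_su: "X \<in> su_alg \<Longrightarrow> ppart X \<in> su_alg"
  by (simp add: ppart_def su_scale su_add su_cadj)
lemma kpart_su: "X \<in> su_alg \<Longrightarrow> kpart X \<in> su_alg"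
  by (simp add: kpart_def su_scale su_diff su_cadj)
lemma pk_sum: "ppart X + kpart X = X"
proof -
  have "ppart X + kpart X = (1/2::real) *\<^sub>R ((X + cadj X) + (X - cadj X))"
    unfolding ppart_def kpart_def by (rule scaleR_add_right[symmetric])
  also have "(X + cadj X) + (X - cadj X) = (2::real) *\<^sub>R X" by (simp add: scaleR_2)
  finally show ?thesis by simp
qed
lemma cadj_ppart: "cadj (ppart X) = ppart X"
  by (simp add: ppart_def cadj_scaleR cadj_add add.commute)
lemma cadj_kpart: "cadj (kpart X) = - kpart X"
  by (simp add: kpart_def cadj_scaleR cadj_diff scaleR_diff_right)
lemma linear_ppart: "linear ppart"
  by (rule linearI) (simp_all add: ppart_def cadj_add cadj_scaleR algebra_simps)
lemma linear_kpart: "linear kpart"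
  by (rule linearI) (simp_all add: kpart_def cadj_diff cadj_add cadj_scaleR algebra_simps)

definition offd :: "'n option \<Rightarrow> 'n option \<Rightarrow> complex \<Rightarrow> complex \<Rightarrow> 'n::finite cmat" where
  "offd i j \<alpha> \<beta> = (\<chi> a b. if a = i \<and> b = j then \<alpha> else if a = j \<and> b = i then \<beta> else 0)"

lemma offd_su: assumes "i \<noteq> j" "cnj \<beta> * sg j + sg i * \<alpha> = 0"
  shows "offd i j \<alpha> \<beta> \<in> su_alg"
proof -
  have "offd i j \<alpha> \<beta> $ k $ k = 0" for k using assms(1) by (auto simp: offd_def)
  then have t: "trace (offd i j \<alpha> \<beta>) = 0" by (simp add: trace_def)
  have c2: "cnj \<alpha> * sg i + sg j * \<beta> = 0"
  proof -
    have "cnj (cnj \<beta> * sg j + sg i * \<alpha>) = 0" using assms(2) by simp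
    then show ?thesis by (simp add: algebra_simps)
  qed
  show ?thesis using assms t c2 unfolding su_iff by (auto simp: offd_def)
qed

lemma offd_mul:
  assumes ij: "i \<noteq> j"
  shows "(Z ** offd i j \<alpha> \<beta>) $ a $ j = Z$a$i * \<alpha>"
    and "(offd i j \<alpha> \<beta> ** Z) $ a $ j = (if a = i then \<alpha> * Z$j$j else if a = j then \<beta> * Z$i$j else 0)"
proof -
  have "(Z ** offd i j \<alpha> \<beta>) $ a $ j = (\<Sum>k\<in>UNIV. Z$a$k * offd i j \<alpha> \<beta> $ k $ j)"
    by (simp add: matrix_matrix_mult_def)
  also have "\<dots> = (\<Sum>k\<in>UNIV. if k = i then Z$a$i * \<alpha> else 0)"
    by (rule sum.cong) (use ij in \<open>auto simp: offd_def\<close>)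
  finally show "(Z ** offd i j \<alpha> \<beta>) $ a $ j = Z$a$i * \<alpha>" by simp
next
  have "(offd i j \<alpha> \<beta> ** Z) $ a $ j = (\<Sum>k\<in>UNIV. offd i j \<alpha> \<beta> $ a $ k * Z$k$j)"
    by (simp add: matrix_matrix_mult_def)
  also have "\<dots> = (\<Sum>k\<in>UNIV. (if k = j then (if a = i then \<alpha> * Z$j$j else 0) else 0)
      + (if k = i then (if a = j then \<beta> * Z$i$j else 0) else 0))"
    by (rule sum.cong) (use ij in \<open>auto simp: offd_def\<close>)
  also have "\<dots> = (if a = i then \<alpha> * Z$j$j else 0) + (if a = j then \<beta> * Z$i$j else 0)"
    by (simp add: sum.distrib)
  finally show "(offd i j \<alpha> \<beta> ** Z) $ a $ j = (if a = i then \<alpha> * Z$j$j else if a = j then \<beta> * Z$i$j else 0)"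
    using ij by auto
qed

lemma center_zero:
  assumes tr: "trace Z = 0" and comm: "\<And>W. W \<in> su_alg \<Longrightarrow> lie_br Z W = 0"
  shows "Z = (0::'n::finite cmat)"
proof -
  have key: "Z$j$i = 0 \<and> Z$i$i = Z$j$j" if ij: "i \<noteq> j" for i j
  proof -
    define s where "s = sg i * sg j"
    have W1: "offd i j 1 (- s) \<in> su_alg" using ij by (intro offd_su) (simp_all add: s_def algebra_simps)
    have W2: "offd i j \<i> (\<i> * s) \<in> su_alg" using ij by (intro offd_su) (simp_all add: s_def algebra_simps)
    have e1: "Z ** offd i j 1 (- s) = offd i j 1 (- s) ** Z" using comm[OF W1] by (simp add: lie_br_def)
    have e2: "Z ** offd i j \<i> (\<i> * s) = offd i j \<i> (\<i> * s) ** Z" using comm[OF W2] by (simp add: lie_br_def)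
    have a1: "Z$a$i * 1 = (if a = i then 1 * Z$j$j else if a = j then (-s) * Z$i$j else 0)" for a
      using arg_cong[OF e1, of "\<lambda>M. M$a$j"] offd_mul[OF ij] by metis
    have a2: "Z$a$i * \<i> = (if a = i then \<i> * Z$j$j else if a = j then (\<i> * s) * Z$i$j else 0)" for a
      using arg_cong[OF e2, of "\<lambda>M. M$a$j"] offd_mul[OF ij] by metis
    have sne: "s \<noteq> 0" by (simp add: s_def sg_def)
    from a1[of j] a2[of j] ij have q1: "Z$j$i = - s * Z$i$j" and q2: "Z$j$i = s * Z$i$j" by (auto simp: mult.commute)
    from q1 q2 have "2 * (s * Z$i$j) = 0" by simp
    then have "Z$i$j = 0" using sne by simp
    then have "Z$j$i = 0" using q2 by simp
    moreover have "Z$i$i = Z$j$j" using a1[of i] by simp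
    ultimately show ?thesis by simp
  qed
  have diag: "Z$a$a = Z$None$None" for a
  proof (cases "a = None")
    case False then show ?thesis using key[of a None] by simp
  qed simp
  have "trace Z = (\<Sum>i\<in>(UNIV::'n option set). Z$None$None)"
    unfolding trace_def by (rule sum.cong[OF refl]) (rule diag)
  then have "trace Z = of_nat CARD('n option) * Z$None$None" by simp
  moreover have "(of_nat CARD('n option)::complex) \<noteq> 0" by (simp only: of_nat_eq_0_iff) simp
  ultimately have z: "Z$None$None = 0" using tr by simp
  show ?thesis
  proof (rule vec_eq_iff[THEN iffD2], intro allI)
    fix a show "Z$a = 0$a"
    proof (rule vec_eq_iff[THEN iffD2], intro allI)
      fix b show "Z$a$b = 0$a$b"
      proof (cases "a = b")
        case True then show ?thesis using diag[of a] z by simp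
      next
        case False then show ?thesis using key[of b a] by simp
      qed
    qed
  qed
qed



lemma su_nonzero_unit: "\<exists>y::'n::finite cmat. y \<in> su_alg \<and> y \<bullet> y = 1"
proof -
  define W where "W = (offd None (Some undefined) 1 1 :: 'n cmat)"
  have W: "W \<in> su_alg" unfolding W_def by (rule offd_su) (auto simp: sg_def)
  have "W $ None $ Some undefined = 1" by (simp add: W_def offd_def)
  then have "W \<noteq> 0" by auto
  then have n: "norm W \<noteq> 0" by simp
  show ?thesis
    by (rule exI[of _ "(1 / norm W) *\<^sub>R W"])
       (use W n in \<open>simp add: su_scale dot_square_norm power2_eq_square\<close>)
qed

definition isE :: "'n::finite cmat set \<Rightarrow> bool" where
  "isE F \<longleftrightarrow> finite F \<and> F \<subseteq> su_alg \<and> (\<forall>v\<in>su_alg. v = (\<Sum>f\<in>F. (v \<bullet> f) *\<^sub>R f))"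

definition E0 :: "'n::finite cmat set" where
  "E0 = (SOME F. isE F)"

lemma isE0: "isE (E0::'n::finite cmat set)"
proof -
  obtain y :: "'n cmat" where y: "y \<in> su_alg" "y \<bullet> y = 1" using su_nonzero_unit by blast
  have "\<exists>F. finite F \<and> F \<subseteq> su_alg \<and> y \<in> F \<and> (\<forall>f\<in>F. f \<bullet> f = 1)
     \<and> (\<forall>f\<in>F. \<forall>f'\<in>F. f \<noteq> f' \<longrightarrow> f \<bullet> f' = 0) \<and> (\<forall>v\<in>su_alg. v = (\<Sum>f\<in>F. (v \<bullet> f) *\<^sub>R f))"
    by (rule gs_exists[of su_alg "inner", OF su_subspace inner_add_left inner_scaleR_left inner_commute _ y]) simp
  then obtain F where "finite F" "F \<subseteq> (su_alg :: 'n cmat set)" "\<forall>v\<in>su_alg. v = (\<Sum>f\<in>F. (v \<bullet> f) *\<^sub>R f)"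
    by (elim exE conjE)
  then have "isE F" unfolding isE_def by blast
  then show ?thesis unfolding E0_def by (rule someI)
qed

lemma E0_fin: "finite (E0::'n::finite cmat set)" using isE0 unfolding isE_def by blast
lemma E0_sub: "(E0::'n::finite cmat set) \<subseteq> su_alg" using isE0 unfolding isE_def by blast
lemma E0_exp: "(v::'n::finite cmat) \<in> su_alg \<Longrightarrow> v = (\<Sum>f\<in>E0. (v \<bullet> f) *\<^sub>R f)"
  using isE0 unfolding isE_def by blast
lemmas E0_props = E0_fin E0_sub E0_exp

definition trf :: "('n::finite cmat \<Rightarrow> 'n cmat) \<Rightarrow> real" where
  "trf T = (\<Sum>e\<in>E0. T e \<bullet> e)"

lemma trace_E0: assumes "linear T" "\<And>v. v \<in> su_alg \<Longrightarrow> T v \<in> su_alg"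
  shows "trace_on (su_alg::'n::finite cmat set) T = trf T"
proof -
  have "trace_on (su_alg::'n::finite cmat set) T = (\<Sum>i\<in>E0. inner (T (id i)) (id i))"
    by (rule trace_frame[of su_alg E0 id inner, OF su_subspace E0_props(1) _ _ _ _ assms])
       (use E0_props in \<open>auto simp: inner_add_left\<close>)
  then show ?thesis by (simp add: trf_def)
qed

lemma trf_cyc:
  assumes S: "linear S" and T: "linear T" and SV: "\<And>v. v \<in> su_alg \<Longrightarrow> S v \<in> su_alg"
    and TV: "\<And>v. v \<in> su_alg \<Longrightarrow> T v \<in> su_alg"
  shows "trf (\<lambda>x::'n::finite cmat. S (T x)) = trf (\<lambda>x. T (S x))"
proof -
  have a: "S (T e) \<bullet> e = (\<Sum>f\<in>E0. (T e \<bullet> f) * (S f \<bullet> e))" if "e \<in> E0" for e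
  proof -
    have eq: "T e = (\<Sum>f\<in>E0. (T e \<bullet> f) *\<^sub>R f)" using E0_exp that TV E0_sub by blast
    have "S (T e) = S (\<Sum>f\<in>E0. (T e \<bullet> f) *\<^sub>R f)" using arg_cong[OF eq, of S] .
    also have "\<dots> = (\<Sum>f\<in>E0. (T e \<bullet> f) *\<^sub>R S f)"
      by (simp add: linear_sum[OF S] linear_scale[OF S])
    finally have "S (T e) = (\<Sum>f\<in>E0. (T e \<bullet> f) *\<^sub>R S f)" .
    then show ?thesis by (simp add: inner_sum_left)
  qed
  have b: "T (S f) \<bullet> f = (\<Sum>e\<in>E0. (S f \<bullet> e) * (T e \<bullet> f))" if "f \<in> E0" for f
  proof -
    have eq: "S f = (\<Sum>e\<in>E0. (S f \<bullet> e) *\<^sub>R e)" using E0_exp that SV E0_sub by blast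
    have "T (S f) = T (\<Sum>e\<in>E0. (S f \<bullet> e) *\<^sub>R e)" using arg_cong[OF eq, of T] .
    also have "\<dots> = (\<Sum>e\<in>E0. (S f \<bullet> e) *\<^sub>R T e)"
      by (simp add: linear_sum[OF T] linear_scale[OF T])
    finally have "T (S f) = (\<Sum>e\<in>E0. (S f \<bullet> e) *\<^sub>R T e)" .
    then show ?thesis by (simp add: inner_sum_left)
  qed
  show ?thesis unfolding trf_def
    by (simp add: a b) (subst sum.swap, simp add: mult.commute)
qed

definition Bf :: "'n::finite cmat \<Rightarrow> 'n cmat \<Rightarrow> real" where
  "Bf X Y = trf (\<lambda>Z. lie_br X (lie_br Y Z))"

lemma ad_lin: "linear (\<lambda>Z. lie_br X (lie_br Y Z))"
  by (rule linearI) (simp_all add: lie_add_right lie_scale_right)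

lemma killing_Bf: "X \<in> su_alg \<Longrightarrow> Y \<in> su_alg \<Longrightarrow> killing X Y = Bf X Y"
  unfolding killing_def Bf_def by (rule trace_E0[OF ad_lin]) (simp add: su_lie)

lemma Bf_alt: "Bf A B = (\<Sum>e\<in>E0. lie_br B e \<bullet> lie_br (cadj A) e)"
  by (simp add: Bf_def trf_def inner_lie)

lemma Bf_sym: assumes "X \<in> su_alg" "Y \<in> su_alg" shows "Bf X Y = Bf Y X"
  unfolding Bf_def
  by (rule trf_cyc[OF linear_lie_right linear_lie_right]) (use assms in \<open>simp_all add: su_lie\<close>)

lemma Bf_inv: assumes Z: "Z \<in> su_alg" and X: "X \<in> su_alg" and W: "W \<in> su_alg"
  shows "Bf (lie_br Z X) W = - Bf X (lie_br Z W)"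
proof -
  have l: "linear (\<lambda>U. lie_br X (lie_br W U))" by (rule ad_lin)
  have c: "trf (\<lambda>U. lie_br Z (lie_br X (lie_br W U))) = trf (\<lambda>U. lie_br X (lie_br W (lie_br Z U)))"
    by (rule trf_cyc[OF linear_lie_right l]) (use assms in \<open>simp_all add: su_lie\<close>)
  have "Bf (lie_br Z X) W = trf (\<lambda>U. lie_br Z (lie_br X (lie_br W U))) - trf (\<lambda>U. lie_br X (lie_br Z (lie_br W U)))"
    by (simp add: Bf_def trf_def jacobi inner_diff_left sum_subtractf)
  moreover have "Bf X (lie_br Z W) = trf (\<lambda>U. lie_br X (lie_br Z (lie_br W U))) - trf (\<lambda>U. lie_br X (lie_br W (lie_br Z U)))"
    by (simp add: Bf_def trf_def jacobi lie_diff_right inner_diff_left sum_subtractf)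
  ultimately show ?thesis using c by simp
qed

lemma Bf_add_left: "Bf (A + B) C = Bf A C + Bf B C"
  by (simp add: Bf_def trf_def lie_add_left inner_add_left sum.distrib)
lemma Bf_add_right: "Bf C (A + B) = Bf C A + Bf C B"
  by (simp add: Bf_def trf_def lie_add_left lie_add_right inner_add_left sum.distrib)
lemma Bf_scale_left: "Bf (r *\<^sub>R A) C = r * Bf A C"
  by (simp add: Bf_def trf_def lie_scale_left sum_distrib_left)
lemma Bf_scale_right: "Bf C (r *\<^sub>R A) = r * Bf C A"
  by (simp add: Bf_def trf_def lie_scale_left lie_scale_right sum_distrib_left)
lemma Bf_minus_left: "Bf (- A) C = - Bf A C"
  using Bf_scale_left[of "-1" A C] by simp
lemma Bf_minus_right: "Bf C (- A) = - Bf C A"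
  using Bf_scale_right[of C "-1" A] by simp
lemma Bf_diff_right: "Bf C (A - B) = Bf C A - Bf C B"
  using Bf_add_right[of C A "- B"] Bf_minus_right[of C B] by simp

lemma Bf_kp: fixes X Y :: "'n::finite cmat" assumes X: "X \<in> su_alg" and Y: "Y \<in> su_alg"
  shows "Bf (kpart X) (ppart Y) = 0"
proof -
  let ?k = "kpart X" and ?p = "ppart Y"
  have k: "?k \<in> su_alg" and p: "?p \<in> su_alg" using X Y kpart_su ppart_su by auto
  define th where "th = (\<lambda>A::'n cmat. - cadj A)"
  have thV: "th v \<in> su_alg" if "v \<in> su_alg" for v using that by (simp add: th_def su_neg su_cadj)
  have thinner: "th v \<bullet> e = v \<bullet> th e" for v e
    using inner_cadj[of v "cadj e"] by (simp add: th_def)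
  have exp: "v = (\<Sum>e\<in>E0. (v \<bullet> th e) *\<^sub>R th e)" if v: "v \<in> su_alg" for v
  proof -
    have eq: "th v = (\<Sum>e\<in>E0. (th v \<bullet> e) *\<^sub>R e)" using E0_exp thV[OF v] by blast
    have "th (th v) = th (\<Sum>e\<in>E0. (th v \<bullet> e) *\<^sub>R e)" using arg_cong[OF eq, of th] .
    also have "\<dots> = (\<Sum>e\<in>E0. (th v \<bullet> e) *\<^sub>R th e)"
    proof -
      have "linear th" unfolding th_def by (rule linearI) (simp_all add: cadj_add cadj_scaleR)
      then show ?thesis by (simp add: linear_sum linear_scale)
    qed
    finally have "th (th v) = (\<Sum>e\<in>E0. (v \<bullet> th e) *\<^sub>R th e)" by (simp only: thinner)
    moreover have "th (th v) = v" by (simp add: th_def cadj_minus)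
    ultimately show ?thesis by simp
  qed
  have "killing ?k ?p = (\<Sum>e\<in>E0. lie_br ?k (lie_br ?p (th e)) \<bullet> th e)"
    unfolding killing_def
    by (rule trace_frame[of su_alg E0 th inner, OF su_subspace E0_props(1) _ _ _ exp ad_lin])
       (use E0_props(2) thV k p in \<open>auto simp: inner_add_left su_lie\<close>)
  also have "\<dots> = (\<Sum>e\<in>E0. - (lie_br ?k (lie_br ?p e) \<bullet> e))"
  proof (rule sum.cong[OF refl])
    fix e
    have ck: "cadj ?k = - ?k" by (rule cadj_kpart)
    have cp: "cadj ?p = ?p" by (rule cadj_ppart)
    have "cadj (lie_br ?k (lie_br ?p e)) = lie_br (lie_br (cadj e) ?p) (- ?k)"
      by (simp only: cadj_lie ck cp)
    also have "\<dots> = lie_br ?k (lie_br (cadj e) ?p)"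
      by (simp only: lie_minus_right lie_anti[of "lie_br (cadj e) ?p" ?k] minus_minus)
    also have "\<dots> = - lie_br ?k (lie_br ?p (cadj e))"
      by (simp only: lie_anti[of "cadj e" ?p] lie_minus_right)
    also have "\<dots> = lie_br ?k (lie_br ?p (th e))"
      by (simp only: th_def lie_minus_right)
    finally have "lie_br ?k (lie_br ?p (th e)) = cadj (lie_br ?k (lie_br ?p e))" by simp
    then show "lie_br ?k (lie_br ?p (th e)) \<bullet> th e = - (lie_br ?k (lie_br ?p e) \<bullet> e)"
      by (simp add: th_def inner_cadj)
  qed
  also have "\<dots> = - Bf ?k ?p" by (simp add: Bf_def trf_def sum_negf)
  finally show ?thesis using killing_Bf[OF k p] by simp
qed



definition gf :: "'n::finite cmat \<Rightarrow> 'n cmat \<Rightarrow> real" where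
  "gf X Y = (\<Sum>e\<in>E0. lie_br (ppart X) e \<bullet> lie_br (ppart Y) e + lie_br (kpart X) e \<bullet> lie_br (kpart Y) e)"

lemma ppart_add: "ppart (A + B) = ppart A + ppart B"
proof -
  have e: "A + B + cadj (A + B) = (A + cadj A) + (B + cadj B)" by (simp add: cadj_add algebra_simps)
  show ?thesis unfolding ppart_def e by (rule scaleR_add_right)
qed
lemma kpart_add: "kpart (A + B) = kpart A + kpart B"
proof -
  have e: "A + B - cadj (A + B) = (A - cadj A) + (B - cadj B)" by (simp add: cadj_add algebra_simps)
  show ?thesis unfolding kpart_def e by (rule scaleR_add_right)
qed
lemma ppart_scale: "ppart (r *\<^sub>R A) = r *\<^sub>R ppart A"
  by (simp add: ppart_def cadj_scaleR scaleR_add_right)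
lemma kpart_scale: "kpart (r *\<^sub>R A) = r *\<^sub>R kpart A"
  by (simp add: kpart_def cadj_scaleR scaleR_diff_right)

lemma gf_add_left: "gf (A + B) C = gf A C + gf B C"
  by (simp add: gf_def ppart_add kpart_add lie_add_left inner_add_left sum.distrib algebra_simps)
lemma gf_scale_left: "gf (r *\<^sub>R A) C = r * gf A C"
  by (simp add: gf_def ppart_scale kpart_scale lie_scale_left sum_distrib_left algebra_simps)
lemma gf_sym: "gf A B = gf B A"
  by (simp add: gf_def inner_commute)
lemma gf_add_right: "gf C (A + B) = gf C A + gf C B"
  by (simp add: gf_sym[of C] gf_add_left)
lemma gf_scale_right: "gf C (r *\<^sub>R A) = r * gf C A"
  by (simp add: gf_sym[of C] gf_scale_left)
lemma gf_minus_left: "gf (- A) C = - gf A C" using gf_scale_left[of "-1" A C] by simp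
lemma gf_minus_right: "gf C (- A) = - gf C A" using gf_scale_right[of C "-1" A] by simp
lemma gf_diff_left: "gf (A - B) C = gf A C - gf B C"
  using gf_add_left[of A "- B" C] gf_minus_left by simp
lemma gf_diff_right: "gf C (A - B) = gf C A - gf C B"
  using gf_add_right[of C A "- B"] gf_minus_right by simp
lemma gf_zero_left[simp]: "gf 0 C = 0" using gf_scale_left[of 0 0 C] by simp
lemma gf_zero_right[simp]: "gf C 0 = 0" using gf_scale_right[of C 0 0] by simp

lemma gf_nonneg: "gf X X \<ge> 0"
  by (simp add: gf_def sum_nonneg)

lemma gcan_gf: assumes "X \<in> su_alg" "Y \<in> su_alg" shows "gcan X Y = gf X Y"
proof -
  have "gcan X Y = Bf (ppart X) (ppart Y) - Bf (kpart X) (kpart Y)"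
    using assms by (simp add: gcan_def killing_Bf ppart_su kpart_su)
  also have "\<dots> = gf X Y"
    by (simp add: Bf_alt gf_def cadj_ppart cadj_kpart lie_minus_left sum_subtractf[symmetric]
        sum.distrib inner_commute)
  finally show ?thesis .
qed

lemma cadj_pk: "cadj Y = ppart Y - kpart Y"
  using pk_sum[of Y] cadj_ppart[of Y] cadj_kpart[of Y] cadj_add[of "ppart Y" "kpart Y"] by simp

lemma gf_Bf: assumes X: "X \<in> su_alg" and Y: "Y \<in> su_alg" shows "gf X Y = Bf X (cadj Y)"
proof -
  have "Bf X (cadj Y) = Bf (ppart X + kpart X) (ppart Y - kpart Y)"
    by (simp add: pk_sum cadj_pk)
  also have "\<dots> = Bf (ppart X) (ppart Y) - Bf (ppart X) (kpart Y) + Bf (kpart X) (ppart Y) - Bf (kpart X) (kpart Y)"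
    by (simp add: Bf_add_left Bf_diff_right)
  also have "Bf (ppart X) (kpart Y) = 0"
    using Bf_sym[OF ppart_su[OF X] kpart_su[OF Y]] Bf_kp[OF Y X] by simp
  also have "Bf (kpart X) (ppart Y) = 0" using Bf_kp[OF X Y] .
  finally have "Bf X (cadj Y) = Bf (ppart X) (ppart Y) - Bf (kpart X) (kpart Y)" by simp
  also have "\<dots> = gcan X Y" using X Y by (simp add: gcan_def killing_Bf ppart_su kpart_su)
  finally show ?thesis using gcan_gf[OF X Y] by simp
qed

lemma ad_zero_center:
  assumes A: "A \<in> su_alg" and z: "\<And>e. e \<in> E0 \<Longrightarrow> lie_br A e = 0"
  shows "A = 0"
proof (rule center_zero)
  show "trace A = 0" using A su_alg_def by auto
  fix W :: "'a cmat" assume W: "W \<in> su_alg"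
  have "lie_br A W = lie_br A (\<Sum>e\<in>E0. (W \<bullet> e) *\<^sub>R e)" using arg_cong[OF E0_exp[OF W], of "lie_br A"] .
  also have "\<dots> = (\<Sum>e\<in>E0. (W \<bullet> e) *\<^sub>R lie_br A e)"
    using linear_lie_right[of A] by (simp add: linear_sum linear_scale)
  also have "\<dots> = 0" using z by simp
  finally show "lie_br A W = 0" .
qed

lemma gf_pos: assumes X: "X \<in> su_alg" and nz: "X \<noteq> 0" shows "gf X X > 0"
proof (rule ccontr)
  assume "\<not> gf X X > 0"
  then have "gf X X = 0" using gf_nonneg[of X] by simp
  then have "\<forall>e\<in>E0. lie_br (ppart X) e \<bullet> lie_br (ppart X) e + lie_br (kpart X) e \<bullet> lie_br (kpart X) e = 0"
    unfolding gf_def by (subst (asm) sum_nonneg_eq_0_iff) (auto simp: E0_props(1))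
  then have "\<forall>e\<in>E0. lie_br (ppart X) e = 0 \<and> lie_br (kpart X) e = 0"
    by (metis add_nonneg_eq_0_iff inner_eq_zero_iff inner_ge_zero)
  then have "ppart X = 0" "kpart X = 0"
    using ad_zero_center ppart_su[OF X] kpart_su[OF X] by blast+
  then show False using pk_sum[of X] nz by simp
qed

lemma ppart_cadj: "ppart (cadj X) = ppart X" by (simp add: ppart_def add.commute)
lemma kpart_cadj: "kpart (cadj X) = - kpart X" by (simp add: kpart_def scaleR_diff_right)

lemma gf_cadj: "gf (cadj X) (cadj X) = gf X X"
  by (simp add: gf_def ppart_cadj kpart_cadj lie_minus_left)

lemma gf_adj: assumes Z: "Z \<in> su_alg" and X: "X \<in> su_alg" and W: "W \<in> su_alg"
  shows "gf (lie_br Z X) W = gf X (lie_br (cadj Z) W)"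
proof -
  have Zs: "cadj Z \<in> su_alg" and Ws: "cadj W \<in> su_alg" using su_cadj Z W by auto
  have "gf (lie_br Z X) W = Bf (lie_br Z X) (cadj W)" using gf_Bf su_lie Z X W by blast
  also have "\<dots> = - Bf X (lie_br Z (cadj W))" using Bf_inv[OF Z X Ws] .
  also have "lie_br Z (cadj W) = cadj (lie_br W (cadj Z))" by (simp add: cadj_lie)
  also have "- Bf X (cadj (lie_br W (cadj Z))) = - gf X (lie_br W (cadj Z))"
    using gf_Bf[OF X su_lie[OF W Zs]] by simp
  also have "\<dots> = gf X (lie_br (cadj Z) W)"
    using lie_anti[of W "cadj Z"] gf_minus_right[of X "lie_br (cadj Z) W"] by simp
  finally show ?thesis .
qed

lemma gf_bracket: assumes Z: "Z \<in> su_alg" and Y: "Y \<in> su_alg"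
  shows "gf (lie_br Z Y) (lie_br Z Y) \<le> gf Z Z * gf Y Y"
proof (cases "Y = 0")
  case True then show ?thesis by simp
next
  case False
  have gY: "gf Y Y > 0" using gf_pos[OF Y False] .
  define c where "c = 1 / sqrt (gf Y Y)"
  define y where "y = c *\<^sub>R Y"
  have ys: "y \<in> su_alg" using Y by (simp add: y_def su_scale)
  have c2: "c * c * gf Y Y = 1" using gY by (simp add: c_def)
  have yy: "gf y y = 1" using c2 by (simp add: y_def gf_scale_left gf_scale_right mult.assoc)
  obtain F where F: "finite F" "F \<subseteq> su_alg" "y \<in> F" "\<forall>f\<in>F. gf f f = 1"
    "\<forall>f\<in>F. \<forall>f'\<in>F. f \<noteq> f' \<longrightarrow> gf f f' = 0" "\<forall>v\<in>su_alg. v = (\<Sum>f\<in>F. gf v f *\<^sub>R f)"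
    using gs_exists[of su_alg gf, OF su_subspace gf_add_left gf_scale_left gf_sym gf_pos ys yy] by blast
  have Zs: "cadj Z \<in> su_alg" using su_cadj Z by auto
  have "killing (cadj Z) Z = (\<Sum>f\<in>F. gf (lie_br (cadj Z) (lie_br Z (id f))) (id f))"
    unfolding killing_def
    by (rule trace_frame[of su_alg F id gf, OF su_subspace F(1) _ gf_add_left gf_scale_left _ ad_lin])
       (use F(2,6) Z Zs in \<open>auto simp: su_lie\<close>)
  also have "\<dots> = (\<Sum>f\<in>F. gf (lie_br Z f) (lie_br Z f))"
  proof (rule sum.cong[OF refl])
    fix f assume f: "f \<in> F"
    then have fs: "f \<in> su_alg" using F(2) by auto
    show "gf (lie_br (cadj Z) (lie_br Z (id f))) (id f) = gf (lie_br Z f) (lie_br Z f)"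
      using gf_adj[OF Z fs su_lie[OF Z fs]] gf_sym by simp
  qed
  finally have k: "killing (cadj Z) Z = (\<Sum>f\<in>F. gf (lie_br Z f) (lie_br Z f))" .
  have "killing (cadj Z) Z = gf Z Z"
    using killing_Bf[OF Zs Z] gf_Bf[OF Zs Zs] gf_cadj[of Z] by simp
  then have "gf (lie_br Z y) (lie_br Z y) \<le> gf Z Z"
    using k member_le_sum[of y F "\<lambda>f. gf (lie_br Z f) (lie_br Z f)"] F(1,3) gf_nonneg by auto
  moreover have "gf (lie_br Z y) (lie_br Z y) = c * c * gf (lie_br Z Y) (lie_br Z Y)"
    by (simp add: y_def lie_scale_right gf_scale_left gf_scale_right)
  ultimately have "c * c * gf (lie_br Z Y) (lie_br Z Y) \<le> gf Z Z" by simp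
  then have "gf Y Y * (c * c * gf (lie_br Z Y) (lie_br Z Y)) \<le> gf Y Y * gf Z Z"
    using gY by (simp add: mult_left_mono)
  then have "(c * c * gf Y Y) * gf (lie_br Z Y) (lie_br Z Y) \<le> gf Z Z * gf Y Y" by (simp add: mult_ac)
  then show ?thesis using c2 by simp
qed



definition NN :: "'n::finite itself \<Rightarrow> real" where "NN _ = real CARD('n) + 1"

definition gt :: "'n::finite cmat \<Rightarrow> 'n cmat \<Rightarrow> real" where
  "gt X Y = gf X Y / (real CARD('n) + 1)"

lemma NN_pos: "real CARD('n::finite) + 1 > 0" by simp

lemma gtil_gt: "X \<in> su_alg \<Longrightarrow> Y \<in> su_alg \<Longrightarrow> gtil X Y = gt X Y"
  by (simp add: gtil_def gt_def gcan_gf)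

lemma gt_add_left: "gt (A + B) C = gt A C + gt B C" by (simp add: gt_def gf_add_left add_divide_distrib)
lemma gt_scale_left: "gt (r *\<^sub>R A) C = r * gt A C" by (simp add: gt_def gf_scale_left)
lemma gt_sym: "gt A B = gt B A" by (simp add: gt_def gf_sym)
lemma gt_add_right: "gt C (A + B) = gt C A + gt C B" by (simp add: gt_def gf_add_right add_divide_distrib)
lemma gt_scale_right: "gt C (r *\<^sub>R A) = r * gt C A" by (simp add: gt_def gf_scale_right)
lemma gt_minus_left: "gt (- A) C = - gt A C" by (simp add: gt_def gf_minus_left)
lemma gt_minus_right: "gt C (- A) = - gt C A" by (simp add: gt_def gf_minus_right)
lemma gt_diff_left: "gt (A - B) C = gt A C - gt B C" by (simp add: gt_def gf_diff_left diff_divide_distrib)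
lemma gt_diff_right: "gt C (A - B) = gt C A - gt C B" by (simp add: gt_def gf_diff_right diff_divide_distrib)
lemma gt_zero_left[simp]: "gt 0 C = 0" by (simp add: gt_def)
lemma gt_zero_right[simp]: "gt C 0 = 0" by (simp add: gt_def)
lemma gt_nonneg: "gt X X \<ge> 0" by (simp add: gt_def gf_nonneg)
lemma gt_pos: "X \<in> su_alg \<Longrightarrow> X \<noteq> 0 \<Longrightarrow> gt X X > 0" by (simp add: gt_def gf_pos)
lemma gt_sum_left: "gt (\<Sum>i\<in>I. a i *\<^sub>R v i) w = (\<Sum>i\<in>I. a i * gt (v i) w)"
  by (rule G_sum_left[of gt, OF gt_add_left gt_scale_left])

lemma gt_bracket: fixes Z Y :: "'n::finite cmat" assumes "Z \<in> su_alg" "Y \<in> su_alg"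
  shows "gt (lie_br Z Y) (lie_br Z Y) \<le> (real CARD('n) + 1) * gt Z Z * gt Y Y"
proof -
  define N where "N = real CARD('n) + 1"
  have g: "gf (lie_br Z Y) (lie_br Z Y) \<le> gf Z Z * gf Y Y" by (rule gf_bracket[OF assms])
  have p: "N > 0" by (simp add: N_def)
  have "gt (lie_br Z Y) (lie_br Z Y) = gf (lie_br Z Y) (lie_br Z Y) / N" by (simp add: gt_def N_def)
  also have "\<dots> \<le> gf Z Z * gf Y Y / N" using g p by (simp add: divide_right_mono)
  also have "\<dots> = N * (gf Z Z / N) * (gf Y Y / N)" using p by (simp add: field_simps)
  also have "\<dots> = (real CARD('n) + 1) * gt Z Z * gt Y Y" by (simp add: gt_def N_def)
  finally show ?thesis .
qed

lemma gt_basis: "\<exists>F. finite F \<and> F \<subseteq> (su_alg::'n::finite cmat set) \<and> (\<forall>v\<in>su_alg. v = (\<Sum>f\<in>F. gt v f *\<^sub>R f))"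
proof -
  obtain y0 :: "'n cmat" where y0: "y0 \<in> su_alg" "y0 \<bullet> y0 = 1" using su_nonzero_unit by blast
  then have "y0 \<noteq> 0" by auto
  then have p: "gt y0 y0 > 0" using gt_pos y0 by auto
  define y where "y = (1 / sqrt (gt y0 y0)) *\<^sub>R y0"
  have ys: "y \<in> su_alg" using y0 by (simp add: y_def su_scale)
  have yy: "gt y y = 1" using p by (simp add: y_def gt_scale_left gt_scale_right)
  show ?thesis
    using gs_exists[of su_alg gt, OF su_subspace gt_add_left gt_scale_left gt_sym gt_pos ys yy] by blast
qed

definition Ko :: "'n::finite cmat \<Rightarrow> 'n cmat \<Rightarrow> 'n cmat \<Rightarrow> real" where
  "Ko X Y W = (gt (lie_br X Y) W - gt (lie_br Y W) X + gt (lie_br W X) Y) / 2"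

lemma Ko_add3: "Ko X Y (A + B) = Ko X Y A + Ko X Y B"
  by (simp add: Ko_def gt_add_right lie_add_left lie_add_right gt_add_left field_simps)
lemma Ko_scale3: "Ko X Y (r *\<^sub>R A) = r * Ko X Y A"
  by (simp add: Ko_def gt_scale_right lie_scale_left lie_scale_right gt_scale_left field_simps)
lemma Ko_add1: "Ko (A + B) Y W = Ko A Y W + Ko B Y W"
  by (simp add: Ko_def gt_add_right lie_add_left lie_add_right gt_add_left field_simps)
lemma Ko_scale1: "Ko (r *\<^sub>R A) Y W = r * Ko A Y W"
  by (simp add: Ko_def gt_scale_right lie_scale_left lie_scale_right gt_scale_left field_simps)
lemma Ko_add2: "Ko X (A + B) W = Ko X A W + Ko X B W"
  by (simp add: Ko_def gt_add_right lie_add_left lie_add_right gt_add_left field_simps)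
lemma Ko_scale2: "Ko X (r *\<^sub>R A) W = r * Ko X A W"
  by (simp add: Ko_def gt_scale_right lie_scale_left lie_scale_right gt_scale_left field_simps)

lemma Ko_compat: "Ko A U W + Ko A W U = 0"
proof -
  have "gt (lie_br U A) W = - gt (lie_br A U) W" by (metis lie_anti gt_minus_left)
  moreover have "gt (lie_br W U) A = - gt (lie_br U W) A" by (metis lie_anti gt_minus_left)
  moreover have "gt (lie_br A W) U = - gt (lie_br W A) U" by (metis lie_anti gt_minus_left)
  ultimately show ?thesis by (simp add: Ko_def field_simps)
qed

definition nab_prop :: "'n::finite cmat \<Rightarrow> 'n cmat \<Rightarrow> 'n cmat \<Rightarrow> bool" where
  "nab_prop X Y Z \<longleftrightarrow> Z \<in> su_alg \<and> (\<forall>W\<in>su_alg. gt Z W = Ko X Y W)"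

lemma nab_unique: assumes "nab_prop X Y Z" "nab_prop X Y Z'" shows "Z = Z'"
proof -
  have s: "Z - Z' \<in> su_alg" using assms by (simp add: nab_prop_def su_diff)
  have "gt (Z - Z') (Z - Z') = 0" using assms s by (simp add: nab_prop_def gt_diff_left)
  then show ?thesis using gt_pos[OF s] by (cases "Z - Z' = 0") auto
qed

lemma nab_exists: "\<exists>Z. nab_prop X Y (Z::'n::finite cmat)"
proof -
  obtain F where F: "finite F" "F \<subseteq> (su_alg::'n cmat set)" "\<forall>v\<in>su_alg. v = (\<Sum>f\<in>F. gt v f *\<^sub>R f)"
    using gt_basis by blast
  define Z where "Z = (\<Sum>f\<in>F. Ko X Y f *\<^sub>R f)"
  have Zs: "Z \<in> su_alg" unfolding Z_def using F(2)
    by (intro subspace_sum[OF su_subspace] su_scale) auto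
  have "gt Z W = Ko X Y W" if W: "W \<in> su_alg" for W
  proof -
    have "gt Z W = (\<Sum>f\<in>F. Ko X Y f * gt f W)" unfolding Z_def by (rule gt_sum_left)
    also have "\<dots> = (\<Sum>f\<in>F. gt W f * Ko X Y f)" by (simp add: gt_sym mult.commute)
    also have "\<dots> = Ko X Y (\<Sum>f\<in>F. gt W f *\<^sub>R f)"
    proof -
      have "Ko X Y (\<Sum>f\<in>F. gt W f *\<^sub>R f) = (\<Sum>f\<in>F. gt W f * Ko X Y f)"
        by (rule G_sum_left[of "\<lambda>a b. Ko X Y a", OF Ko_add3 Ko_scale3])
      then show ?thesis by simp
    qed
    also have "\<dots> = Ko X Y W" using arg_cong[OF F(3)[rule_format, OF W, symmetric], of "Ko X Y"] .
    finally show ?thesis .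
  qed
  then show ?thesis using Zs by (auto simp: nab_prop_def)
qed

lemma nabla_eq: assumes X: "X \<in> su_alg" and Y: "Y \<in> su_alg"
  shows "nab_prop X Y (nabla X Y)"
proof -
  have eq: "(Z \<in> su_alg \<and> (\<forall>W\<in>su_alg. gtil Z W = (gtil (lie_br X Y) W - gtil (lie_br Y W) X + gtil (lie_br W X) Y) / 2))
      \<longleftrightarrow> nab_prop X Y Z" for Z
    unfolding nab_prop_def Ko_def
    using X Y by (auto simp: gtil_gt su_lie)
  have "\<exists>!Z. nab_prop X Y Z" using nab_exists nab_unique by blast
  then have "nab_prop X Y (THE Z. nab_prop X Y Z)" by (rule theI')
  then show ?thesis unfolding nabla_def eq .
qed

lemma nabla_su: "X \<in> su_alg \<Longrightarrow> Y \<in> su_alg \<Longrightarrow> nabla X Y \<in> su_alg"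
  using nabla_eq nab_prop_def by blast
lemma nabla_gt: "X \<in> su_alg \<Longrightarrow> Y \<in> su_alg \<Longrightarrow> W \<in> su_alg \<Longrightarrow> gt (nabla X Y) W = Ko X Y W"
  using nabla_eq nab_prop_def by blast

lemma nabla_unique: "X \<in> su_alg \<Longrightarrow> Y \<in> su_alg \<Longrightarrow> nab_prop X Y Z \<Longrightarrow> nabla X Y = Z"
  using nabla_eq nab_unique by blast

lemma nabla_add1: assumes "A \<in> su_alg" "B \<in> su_alg" "C \<in> su_alg"
  shows "nabla (A + B) C = nabla A C + nabla B C"
  using assms by (intro nabla_unique) (auto simp: nab_prop_def su_add nabla_su nabla_gt gt_add_left Ko_add1)
lemma nabla_scale1: assumes "A \<in> su_alg" "C \<in> su_alg"
  shows "nabla (r *\<^sub>R A) C = r *\<^sub>R nabla A C"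
  using assms by (intro nabla_unique) (auto simp: nab_prop_def su_scale nabla_su nabla_gt gt_scale_left Ko_scale1)
lemma nabla_add2: assumes "A \<in> su_alg" "B \<in> su_alg" "C \<in> su_alg"
  shows "nabla C (A + B) = nabla C A + nabla C B"
  using assms by (intro nabla_unique) (auto simp: nab_prop_def su_add nabla_su nabla_gt gt_add_left Ko_add2)
lemma nabla_scale2: assumes "A \<in> su_alg" "C \<in> su_alg"
  shows "nabla C (r *\<^sub>R A) = r *\<^sub>R nabla C A"
  using assms by (intro nabla_unique) (auto simp: nab_prop_def su_scale nabla_su nabla_gt gt_scale_left Ko_scale2)
lemma nabla_zero1: "C \<in> su_alg \<Longrightarrow> nabla 0 C = 0"
  using nabla_scale1[of 0 C 0] su_zero by simp

lemma compat: assumes "A \<in> su_alg" "U \<in> su_alg" "W \<in> su_alg"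
  shows "gt (nabla A U) W = - gt U (nabla A W)"
proof -
  have 1: "gt (nabla A U) W = Ko A U W" using nabla_gt assms by blast
  have 2: "gt (nabla A W) U = Ko A W U" using nabla_gt assms by blast
  have 3: "gt U (nabla A W) = gt (nabla A W) U" by (rule gt_sym)
  show ?thesis using 1 2 3 Ko_compat[of A U W] by simp
qed

lemma compat0: "A \<in> su_alg \<Longrightarrow> U \<in> su_alg \<Longrightarrow> gt (nabla A U) U = 0"
  using compat[of A U U] gt_sym[of U "nabla A U"] by simp



lemma curv_su: "X \<in> su_alg \<Longrightarrow> Y \<in> su_alg \<Longrightarrow> Z \<in> su_alg \<Longrightarrow> curv X Y Z \<in> su_alg"
  by (simp add: curv_def nabla_su su_lie su_diff)

lemma curv_add2: assumes "X \<in> su_alg" "A \<in> su_alg" "B \<in> su_alg" "Z \<in> su_alg"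
  shows "curv X (A + B) Z = curv X A Z + curv X B Z"
  using assms by (simp add: curv_def nabla_add1 nabla_add2 nabla_su su_lie lie_add_right)
lemma curv_scale2: assumes "X \<in> su_alg" "A \<in> su_alg" "Z \<in> su_alg"
  shows "curv X (r *\<^sub>R A) Z = r *\<^sub>R curv X A Z"
  using assms by (simp add: curv_def nabla_scale1 nabla_scale2 nabla_su su_lie lie_scale_right scaleR_diff_right)
lemma curv_add3: assumes "X \<in> su_alg" "Y \<in> su_alg" "A \<in> su_alg" "B \<in> su_alg"
  shows "curv X Y (A + B) = curv X Y A + curv X Y B"
  using assms by (simp add: curv_def nabla_add2 nabla_su su_lie)
lemma curv_scale3: assumes "X \<in> su_alg" "Y \<in> su_alg" "A \<in> su_alg"
  shows "curv X Y (r *\<^sub>R A) = r *\<^sub>R curv X Y A"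
  using assms by (simp add: curv_def nabla_scale2 nabla_su su_lie scaleR_diff_right)
lemma curv_self: assumes "X \<in> su_alg" "Z \<in> su_alg" shows "curv X X Z = 0"
  using assms by (simp add: curv_def nabla_zero1)

lemma curv_skew: assumes X: "X \<in> su_alg" and Y: "Y \<in> su_alg" and Z: "Z \<in> su_alg"
  shows "gt (curv X Y Z) Z = 0"
proof -
  have a: "gt (nabla X (nabla Y Z)) Z = - gt (nabla Y Z) (nabla X Z)"
    using compat[OF X nabla_su[OF Y Z] Z] .
  have b: "gt (nabla Y (nabla X Z)) Z = - gt (nabla X Z) (nabla Y Z)"
    using compat[OF Y nabla_su[OF X Z] Z] .
  have c: "gt (nabla (lie_br X Y) Z) Z = 0" using compat0[OF su_lie[OF X Y] Z] .
  show ?thesis by (simp only: curv_def gt_diff_left a b c) (simp add: gt_sym[of "nabla Y Z"])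
qed

lemma num_formula: assumes X: "X \<in> su_alg" and Y: "Y \<in> su_alg"
  shows "gt (curv X Y Y) X = - gt (nabla Y Y) (nabla X X) + gt (nabla X Y) (nabla Y X) - gt (nabla (lie_br X Y) Y) X"
proof -
  have a: "gt (nabla X (nabla Y Y)) X = - gt (nabla Y Y) (nabla X X)"
    using compat[OF X nabla_su[OF Y Y] X] .
  have b: "gt (nabla Y (nabla X Y)) X = - gt (nabla X Y) (nabla Y X)"
    using compat[OF Y nabla_su[OF X Y] X] .
  show ?thesis by (simp add: curv_def gt_diff_left a b)
qed

definition nm :: "'n::finite cmat \<Rightarrow> real" where "nm u = sqrt (gt u u)"

lemma nm_nonneg: "nm u \<ge> 0" by (simp add: nm_def gt_nonneg)
lemma nm_sq: "nm u * nm u = gt u u" by (simp add: nm_def gt_nonneg)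

lemma gt_cs_sq: "(gt u v)\<^sup>2 \<le> gt u u * gt v v"
proof -
  have q: "0 \<le> gt u u + 2 * t * gt u v + t * t * gt v v" for t
  proof -
    have "0 \<le> gt (u + t *\<^sub>R v) (u + t *\<^sub>R v)" by (rule gt_nonneg)
    also have "\<dots> = gt u u + 2 * t * gt u v + t * t * gt v v"
      by (simp add: gt_add_left gt_add_right gt_scale_left gt_scale_right gt_sym[of v u] algebra_simps)
    finally show ?thesis .
  qed
  show ?thesis
  proof (cases "gt v v = 0")
    case True
    have "gt u v = 0"
    proof (rule ccontr)
      assume ne: "gt u v \<noteq> 0"
      have "0 \<le> gt u u + 2 * (- (gt u u + 1) / (2 * gt u v)) * gt u v" using q[of "- (gt u u + 1) / (2 * gt u v)"] True by simp
      also have "\<dots> = -1" using ne by (simp add: field_simps)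
      finally show False by simp
    qed
    then show ?thesis using True by simp
  next
    case False
    then have p: "gt v v > 0" using gt_nonneg[of v] by simp
    have "0 \<le> gt u u + 2 * (- gt u v / gt v v) * gt u v + (- gt u v / gt v v) * (- gt u v / gt v v) * gt v v"
      by (rule q)
    also have "\<dots> = gt u u - (gt u v)\<^sup>2 / gt v v" using p by (simp add: field_simps power2_eq_square)
    finally have "(gt u v)\<^sup>2 / gt v v \<le> gt u u" by simp
    then show ?thesis using p by (simp add: pos_divide_le_eq)
  qed
qed

lemma gt_cs: "\<bar>gt u v\<bar> \<le> nm u * nm v"
proof -
  have "\<bar>gt u v\<bar> = sqrt ((gt u v)\<^sup>2)" by simp
  also have "\<dots> \<le> sqrt (gt u u * gt v v)" using gt_cs_sq real_sqrt_le_mono by blast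
  also have "\<dots> = nm u * nm v" by (simp add: nm_def real_sqrt_mult)
  finally show ?thesis .
qed

lemma nm_bracket: assumes "A \<in> su_alg" "B \<in> su_alg"
  shows "nm (lie_br A B) \<le> sqrt (real CARD('n) + 1) * nm A * nm (B::'n::finite cmat)"
proof -
  have "nm (lie_br A B) \<le> sqrt ((real CARD('n) + 1) * gt A A * gt B B)"
    unfolding nm_def using gt_bracket[OF assms] real_sqrt_le_mono by blast
  also have "\<dots> = sqrt (real CARD('n) + 1) * nm A * nm B"
    by (simp add: nm_def real_sqrt_mult)
  finally show ?thesis .
qed

lemma Ko_bound: assumes A: "A \<in> su_alg" and B: "B \<in> su_alg" and W: "W \<in> su_alg"
  shows "\<bar>Ko A B (W::'n::finite cmat)\<bar> \<le> 3/2 * sqrt (real CARD('n) + 1) * nm A * nm B * nm W"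
proof -
  let ?s = "sqrt (real CARD('n) + 1)"
  have s0: "?s \<ge> 0" by simp
  have 1: "\<bar>gt (lie_br A B) W\<bar> \<le> ?s * nm A * nm B * nm W"
  proof -
    have "\<bar>gt (lie_br A B) W\<bar> \<le> nm (lie_br A B) * nm W" by (rule gt_cs)
    also have "\<dots> \<le> (?s * nm A * nm B) * nm W" using nm_bracket[OF A B] mult_right_mono nm_nonneg by blast
    finally show ?thesis .
  qed
  have 2: "\<bar>gt (lie_br B W) A\<bar> \<le> ?s * nm A * nm B * nm W"
  proof -
    have "\<bar>gt (lie_br B W) A\<bar> \<le> nm (lie_br B W) * nm A" by (rule gt_cs)
    also have "\<dots> \<le> (?s * nm B * nm W) * nm A" using nm_bracket[OF B W] mult_right_mono nm_nonneg by blast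
    finally show ?thesis by (simp add: mult_ac)
  qed
  have 3: "\<bar>gt (lie_br W A) B\<bar> \<le> ?s * nm A * nm B * nm W"
  proof -
    have "\<bar>gt (lie_br W A) B\<bar> \<le> nm (lie_br W A) * nm B" by (rule gt_cs)
    also have "\<dots> \<le> (?s * nm W * nm A) * nm B" using nm_bracket[OF W A] mult_right_mono nm_nonneg by blast
    finally show ?thesis by (simp add: mult_ac)
  qed
  define m where "m = ?s * nm A * nm B * nm W"
  have eq: "3/2 * ?s * nm A * nm B * nm W = 3/2 * m" by (simp add: m_def mult.assoc)
  have h1: "\<bar>gt (lie_br A B) W\<bar> \<le> m" using 1 by (simp add: m_def)
  have h2: "\<bar>gt (lie_br B W) A\<bar> \<le> m" using 2 by (simp add: m_def)
  have h3: "\<bar>gt (lie_br W A) B\<bar> \<le> m" using 3 by (simp add: m_def)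
  have u1: "gt (lie_br A B) W - gt (lie_br B W) A + gt (lie_br W A) B \<le> 3 * m"
    and u2: "- (gt (lie_br A B) W - gt (lie_br B W) A + gt (lie_br W A) B) \<le> 3 * m"
    using abs_le_D1[OF h1] abs_le_D2[OF h1] abs_le_D1[OF h2] abs_le_D2[OF h2]
      abs_le_D1[OF h3] abs_le_D2[OF h3] by linarith+
  have "\<bar>gt (lie_br A B) W - gt (lie_br B W) A + gt (lie_br W A) B\<bar> \<le> 3 * m"
    using u1 u2 by (simp only: abs_le_iff)
  then have "\<bar>Ko A B W\<bar> \<le> 3/2 * m" unfolding Ko_def by simp
  then show ?thesis by (simp only: eq)
qed

lemma nabla_bound: assumes A: "A \<in> su_alg" and B: "B \<in> su_alg"
  shows "nm (nabla A B) \<le> 3/2 * sqrt (real CARD('n) + 1) * nm A * nm (B::'n::finite cmat)"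
proof -
  let ?c = "3/2 * sqrt (real CARD('n) + 1) * nm A * nm B"
  have c0: "?c \<ge> 0" by (intro mult_nonneg_nonneg) (auto simp: nm_nonneg)
  have s: "nabla A B \<in> su_alg" using nabla_su[OF A B] .
  have "nm (nabla A B) * nm (nabla A B) = Ko A B (nabla A B)" by (subst nm_sq) (rule nabla_gt[OF A B s])
  also have "\<dots> \<le> ?c * nm (nabla A B)" using abs_le_D1[OF Ko_bound[OF A B s]] by simp
  finally have "nm (nabla A B) * nm (nabla A B) \<le> ?c * nm (nabla A B)" .
  then show ?thesis using nm_nonneg[of "nabla A B"] c0
    by (metis mult_le_cancel_right mult_zero_left not_less order.order_iff_strict)
qed

lemma arith6: "(3/2*r*y*y)*(3/2*r*x*x) + (3/2*r*x*y)*(3/2*r*y*x) + (3/2*r*(r*x*y)*y)*x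
   = 6*(r*r)*(x*x)*(y*(y::real))"
  by (simp add: field_simps)

lemma num_bound: assumes X: "X \<in> su_alg" and Y: "Y \<in> su_alg"
  shows "gt (curv X Y Y) X \<le> 6 * (real CARD('n) + 1) * gt X X * gt (Y::'n::finite cmat) Y"
proof -
  let ?N = "real CARD('n) + 1"
  let ?s = "sqrt ?N"
  let ?c = "3/2 * ?s"
  define x where "x = nm X"
  define y where "y = nm Y"
  have x0: "x \<ge> 0" and y0: "y \<ge> 0" using nm_nonneg x_def y_def by auto
  have s2: "?s * ?s = ?N" by simp
  have s0: "?s \<ge> 0" by simp
  have bYY: "nm (nabla Y Y) \<le> ?c * y * y" using nabla_bound[OF Y Y] y_def by simp
  have bXX: "nm (nabla X X) \<le> ?c * x * x" using nabla_bound[OF X X] x_def by simp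
  have bXY: "nm (nabla X Y) \<le> ?c * x * y" using nabla_bound[OF X Y] x_def y_def by simp
  have bYX: "nm (nabla Y X) \<le> ?c * y * x" using nabla_bound[OF Y X] x_def y_def by simp
  have bL: "nm (nabla (lie_br X Y) Y) \<le> ?c * (?s * x * y) * y"
  proof -
    have "nm (nabla (lie_br X Y) Y) \<le> ?c * nm (lie_br X Y) * y" using nabla_bound[OF su_lie[OF X Y] Y] y_def by simp
    also have "\<dots> \<le> ?c * (?s * x * y) * y"
      using nm_bracket[OF X Y] x_def y_def y0 s0 by (intro mult_right_mono mult_left_mono) auto
    finally show ?thesis .
  qed
  have t1: "- gt (nabla Y Y) (nabla X X) \<le> (?c * y * y) * (?c * x * x)"
  proof -
    have "- gt (nabla Y Y) (nabla X X) \<le> nm (nabla Y Y) * nm (nabla X X)" by (rule abs_le_D2[OF gt_cs])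
    also have "\<dots> \<le> (?c * y * y) * (?c * x * x)" using bYY bXX nm_nonneg x0 y0 by (intro mult_mono) (auto intro!: mult_nonneg_nonneg)
    finally show ?thesis .
  qed
  have t2: "gt (nabla X Y) (nabla Y X) \<le> (?c * x * y) * (?c * y * x)"
  proof -
    have "gt (nabla X Y) (nabla Y X) \<le> nm (nabla X Y) * nm (nabla Y X)" by (rule abs_le_D1[OF gt_cs])
    also have "\<dots> \<le> (?c * x * y) * (?c * y * x)" using bXY bYX nm_nonneg x0 y0 by (intro mult_mono) (auto intro!: mult_nonneg_nonneg)
    finally show ?thesis .
  qed
  have t3: "- gt (nabla (lie_br X Y) Y) X \<le> (?c * (?s * x * y) * y) * x"
  proof -
    have "- gt (nabla (lie_br X Y) Y) X \<le> nm (nabla (lie_br X Y) Y) * nm X" by (rule abs_le_D2[OF gt_cs])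
    also have "\<dots> \<le> (?c * (?s * x * y) * y) * x" using mult_right_mono[OF bL nm_nonneg[of X]] x_def by simp
    finally show ?thesis .
  qed
  have "gt (curv X Y Y) X \<le> (?c * y * y) * (?c * x * x) + (?c * x * y) * (?c * y * x) + (?c * (?s * x * y) * y) * x"
    using num_formula[OF X Y] t1 t2 t3 by linarith
  also have "\<dots> = 6 * (?s * ?s) * (x * x) * (y * y)" by (rule arith6)
  also have "\<dots> = 6 * ?N * gt X X * gt Y Y"
  proof -
    have xx: "x * x = gt X X" and yy: "y * y = gt Y Y" using nm_sq x_def y_def by auto
    show ?thesis by (simp only: s2 xx yy)
  qed
  finally show ?thesis .
qed



theorem proposition3p9:
  fixes X Y :: "'n::finite cmat"
  assumes "X \<in> su_alg" and "Y \<in> su_alg"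
    and "\<forall>a b :: real. a *\<^sub>R X + b *\<^sub>R Y = 0 \<longrightarrow> a = 0 \<and> b = 0"
  shows "sec_curv X Y \<le> (36 * real CARD('n) + 21) / 4"
proof -
  note X = assms(1) and Y = assms(2) and ind = assms(3)
  let ?N = "real CARD('n) + 1"
  have Xnz: "X \<noteq> 0" using ind[rule_format, of 1 0] by auto
  have gX: "gt X X > 0" using gt_pos[OF X Xnz] .
  define t where "t = gt X Y / gt X X"
  define Y' where "Y' = Y - t *\<^sub>R X"
  have Y's: "Y' \<in> su_alg" using X Y by (simp add: Y'_def su_diff su_scale)
  have tXs: "t *\<^sub>R X \<in> su_alg" using X by (simp add: su_scale)
  have Y'nz: "Y' \<noteq> 0"
  proof
    assume "Y' = 0"
    then have "(- t) *\<^sub>R X + 1 *\<^sub>R Y = 0" by (simp add: Y'_def)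
    then show False using ind[rule_format, of "- t" 1] by simp
  qed
  have gY': "gt Y' Y' > 0" using gt_pos[OF Y's Y'nz] .
  have YY: "Y = Y' + t *\<^sub>R X" by (simp add: Y'_def)
  have c1: "curv X Y Y = curv X Y' Y' + t *\<^sub>R curv X Y' X"
  proof -
    have "curv X Y Y = curv X Y' Y + curv X (t *\<^sub>R X) Y"
      unfolding YY[of ] using curv_add2[OF X Y's tXs] X Y's tXs by (simp add: su_add)
    also have "curv X (t *\<^sub>R X) Y = 0" using curv_scale2[OF X X Y] curv_self[OF X Y] by simp
    also have "curv X Y' Y = curv X Y' Y' + t *\<^sub>R curv X Y' X"
      using YY curv_add3[OF X Y's Y's tXs] curv_scale3[OF X Y's X] by simp
    finally show ?thesis by simp
  qed
  have num: "gt (curv X Y Y) X = gt (curv X Y' Y') X"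
    using c1 curv_skew[OF X Y's X] by (simp add: gt_add_left gt_scale_left)
  have den: "gt X X * gt Y Y - (gt X Y)\<^sup>2 = gt X X * gt Y' Y'"
    using gX by (simp add: Y'_def t_def gt_diff_left gt_diff_right gt_scale_left gt_scale_right gt_sym[of Y X]
        field_simps power2_eq_square)
  have dpos: "gt X X * gt Y Y - (gt X Y)\<^sup>2 > 0" using den gX gY' by simp
  have cs: "curv X Y Y \<in> su_alg" using curv_su X Y by blast
  have "sec_curv X Y = gt (curv X Y Y) X / (gt X X * gt Y Y - (gt X Y)\<^sup>2)"
    unfolding sec_curv_def using X Y cs by (simp add: gtil_gt)
  also have "\<dots> \<le> 6 * ?N"
    using num num_bound[OF X Y's] den dpos by (simp add: pos_divide_le_eq mult_ac)
  also have "\<dots> \<le> (36 * real CARD('n) + 21) / 4"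
  proof -
    have "CARD('n) \<ge> 1" using card_gt_0_iff[of "UNIV::'n set"] by simp
    then have c: "real CARD('n) \<ge> 1" by simp
    have e: "(36 * real CARD('n) + 21) / 4 = 9 * real CARD('n) + 21/4" by (simp add: field_simps)
    have f: "6 * (real CARD('n) + 1) = 6 * real CARD('n) + 6" by (simp add: algebra_simps)
    show ?thesis unfolding e f using c by linarith
  qed
  finally show ?thesis .
qed


end
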